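(* Let $\mathcal{B}=\langle V,F,E\rangle$ be a finite bipartite graph and let $W\subseteq V$ be such that the subgraph of $\mathcal{B}$ induced by $(V\setminus W)\cup F$ is self-contained. Then Algorithm 1 (causal ordering via minimal self-contained sets) applied to $(W,\mathcal{B})$ is well-defined, i.e. every run of it can be carried out to completion (at every iteration of the loop the current graph possesses a minimal self-contained set), and its output directed cluster graph is unique, i.e. it does not depend on which minimal self-contained sets are chosen during the run.
   Context: A bipartite graph $\mathcal{B}=\langle V,F,E\rangle$ has disjoint vertex sets $V$ (variable vertices) and $F$ (constraint vertices) and undirected edges $(v-f)$ with $v\in V$, $f\in F$. For $X\subseteq V\cup F$, $\mathrm{adj}_{\mathcal{B}}(X)$ is the set of vertices adjacent in $\mathcal{B}$ to some vertex of $X$. A set $F'\subseteq F$ is self-contained (in $\mathcal{B}$) if $|F'|=|\mathrm{adj}_{\mathcal{B}}(F')|$ and $|F''|\le|\mathrm{adj}_{\mathcal{B}}(F'')|$ for all $F''\subseteq F'$. The graph $\mathcal{B}$ is self-contained if $|F|=|V|$ and $F$ is self-contained. A non-empty self-contained set is minimal self-contained if none of its non-empty strict subsets is self-contained. A directed cluster graph is a pair $\langle\mathcal{V},\mathcal{E}\rangle$ where $\mathcal{V}$ is a partition of a vertex set and $\mathcal{E}$ is a set of directed edges $x\to C$ from vertices $x$ to clusters $C\in\mathcal{V}$. Algorithm 1. Input: $W$ and $\mathcal{B}$ as in the claim. Initialize $\mathcal{E}=\emptyset$, $\mathcal{V}=\{\{w\}:w\in W\}$, and $\mathcal{B}'=\langle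 V',F',E'\rangle$ the subgraph of $\mathcal{B}$ induced by $(V\setminus W)\cup F$. While $\mathcal{B}'$ is not the null graph: choose a minimal self-contained set $S_F\subseteq F'$ of $\mathcal{B}'$; let $C=S_F\cup\mathrm{adj}_{\mathcal{B}'}(S_F)$; add $C$ to $\mathcal{V}$; for every $v\in\mathrm{adj}_{\mathcal{B}}(S_F)\setminus\mathrm{adj}_{\mathcal{B}'}(S_F)$ add the edge $v\to C$ to $\mathcal{E}$; replace $\mathcal{B}'$ by its subgraph induced by $(V'\cup F')\setminus C$. Output: the directed cluster graph $\langle\mathcal{V},\mathcal{E}\rangle$ (the causal ordering graph). *)

theory Defs
  imports Main
begin

definition bipartite_graph :: "'a set \<Rightarrow> 'a set \<Rightarrow> ('a \<times> 'a) set \<Rightarrow> bool" where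
  "bipartite_graph V F E \<longleftrightarrow> V \<inter> F = {} \<and> E \<subseteq> V \<times> F"

definition finite_bipartite_graph :: "'a set \<Rightarrow> 'a set \<Rightarrow> ('a \<times> 'a) set \<Rightarrow> bool" where
  "finite_bipartite_graph V F E \<longleftrightarrow> bipartite_graph V F E \<and> finite V \<and> finite F"

definition adj :: "('a \<times> 'a) set \<Rightarrow> 'a set \<Rightarrow> 'a set" where
  "adj E X = {v. \<exists>f\<in>X. (v, f) \<in> E} \<union> {f. \<exists>v\<in>X. (v, f) \<in> E}"

definition induced_edges :: "('a \<times> 'a) set \<Rightarrow> 'a set \<Rightarrow> ('a \<times> 'a) set" where
  "induced_edges E X = E \<inter> (X \<times> X)"

definition self_contained_set :: "'a set \<Rightarrow> 'a set \<Rightarrow> ('a \<times> 'a) set \<Rightarrow> 'a set \<Rightarrow> bool" where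
  "self_contained_set V F E F' \<longleftrightarrow>
     F' \<subseteq> F \<and> card F' = card (adj E F') \<and> (\<forall>F''. F'' \<subseteq> F' \<longrightarrow> card F'' \<le> card (adj E F''))"

definition self_contained_graph :: "'a set \<Rightarrow> 'a set \<Rightarrow> ('a \<times> 'a) set \<Rightarrow> bool" where
  "self_contained_graph V F E \<longleftrightarrow> card F = card V \<and> self_contained_set V F E F"

definition minimal_self_contained :: "'a set \<Rightarrow> 'a set \<Rightarrow> ('a \<times> 'a) set \<Rightarrow> 'a set \<Rightarrow> bool" where
  "minimal_self_contained V F E S \<longleftrightarrow>
     S \<noteq> {} \<and> self_contained_set V F E S \<and>
     (\<forall>S'. S' \<noteq> {} \<and> S' \<subset> S \<longrightarrow> \<not> self_contained_set V F E S')"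

text \<open>State of Algorithm 1: (V', F', clusters \<V>, edges \<E>). The current graph B' is the
subgraph of B induced by V' \<union> F'. A directed edge x \<rightarrow> C is the pair (x, C).\<close>
type_synonym 'a alg_state = "'a set \<times> 'a set \<times> 'a set set \<times> ('a \<times> 'a set) set"

definition alg_init :: "'a set \<Rightarrow> 'a set \<Rightarrow> 'a set \<Rightarrow> 'a alg_state" where
  "alg_init W V F = (V - W, F, (\<lambda>w. {w}) ` W, {})"

definition alg_step_with :: "('a \<times> 'a) set \<Rightarrow> 'a set \<Rightarrow> 'a alg_state \<Rightarrow> 'a alg_state \<Rightarrow> bool" where
  "alg_step_with E S s s' \<longleftrightarrow>
     (case s of (V', F', Cl, Ed) \<Rightarrow>
       (let E' = induced_edges E (V' \<union> F');
            C = S \<union> adj E' S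
        in minimal_self_contained V' F' E' S \<and>
           s' = (V' - C, F' - C, insert C Cl,
                 Ed \<union> {(v, C) | v. v \<in> adj E S - adj E' S})))"

definition alg_step :: "('a \<times> 'a) set \<Rightarrow> 'a alg_state \<Rightarrow> 'a alg_state \<Rightarrow> bool" where
  "alg_step E s s' \<longleftrightarrow> (\<exists>S. alg_step_with E S s s')"

definition alg_final :: "'a alg_state \<Rightarrow> bool" where
  "alg_final s \<longleftrightarrow> (case s of (V', F', _, _) \<Rightarrow> V' \<union> F' = {})"

definition alg_output :: "'a alg_state \<Rightarrow> 'a set set \<times> ('a \<times> 'a set) set" where
  "alg_output s = (case s of (_, _, Cl, Ed) \<Rightarrow> (Cl, Ed))"

end

theory Submission
  imports Defs
begin

locale bg =
  fixes V F :: "'a set" and E :: "('a \<times> 'a) set"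
  assumes fV: "finite V" and fF: "finite F" and disj: "V \<inter> F = {}" and Esub: "E \<subseteq> V \<times> F"
begin

definition adjV :: "'a set \<Rightarrow> 'a set \<Rightarrow> 'a set" where
  "adjV V' T = {v\<in>V'. \<exists>f\<in>T. (v,f)\<in>E}"

definition sc :: "'a set \<Rightarrow> 'a set \<Rightarrow> 'a set \<Rightarrow> bool" where
  "sc V' F' S \<longleftrightarrow> S \<subseteq> F' \<and> card S = card (adjV V' S) \<and> (\<forall>T\<subseteq>S. card T \<le> card (adjV V' T))"

definition good :: "'a alg_state \<Rightarrow> bool" where
  "good s \<longleftrightarrow> (case s of (V',F',_,_) \<Rightarrow> V' \<subseteq> V \<and> F' \<subseteq> F \<and> card F' = card V' \<and>
      (\<forall>T\<subseteq>F'. card T \<le> card (adjV V' T)))"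

lemma adjV_mono: "T \<subseteq> S \<Longrightarrow> adjV V' T \<subseteq> adjV V' S"
  unfolding adjV_def by blast

lemma adjV_sub: "adjV V' T \<subseteq> V'"
  unfolding adjV_def by blast

lemma adjV_Un: "adjV V' (A \<union> B) = adjV V' A \<union> adjV V' B"
  unfolding adjV_def by blast

lemma adj_eq: "V' \<subseteq> V \<Longrightarrow> F' \<subseteq> F \<Longrightarrow> T \<subseteq> F' \<Longrightarrow> adj (induced_edges E (V'\<union>F')) T = adjV V' T"
  unfolding adj_def induced_edges_def adjV_def using Esub disj by blast

lemma sc_eq:
  assumes a: "V' \<subseteq> V" "F' \<subseteq> F"
  shows "self_contained_set V' F' (induced_edges E (V'\<union>F')) S \<longleftrightarrow> sc V' F' S"
proof (cases "S \<subseteq> F'")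
  case True
  have "\<forall>T. T \<subseteq> S \<longrightarrow> adj (induced_edges E (V'\<union>F')) T = adjV V' T"
    using adj_eq[OF a] True by blast
  then show ?thesis unfolding self_contained_set_def sc_def using True by simp
next
  case False
  then show ?thesis unfolding self_contained_set_def sc_def by simp
qed

lemma msc_eq:
  assumes a: "V' \<subseteq> V" "F' \<subseteq> F"
  shows "minimal_self_contained V' F' (induced_edges E (V'\<union>F')) S \<longleftrightarrow>
   S \<noteq> {} \<and> sc V' F' S \<and> (\<forall>S'. S' \<noteq> {} \<and> S' \<subset> S \<longrightarrow> \<not> sc V' F' S')"
  unfolding minimal_self_contained_def by (simp only: sc_eq[OF a])

lemma step_eq:
  assumes "alg_step_with E S (V',F',Cl,Ed) s'" "V' \<subseteq> V" "F' \<subseteq> F"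
  shows "S \<noteq> {} \<and> sc V' F' S \<and> (\<forall>S'. S' \<noteq> {} \<and> S' \<subset> S \<longrightarrow> \<not> sc V' F' S') \<and>
     s' = (V' - adjV V' S, F' - S, insert (S \<union> adjV V' S) Cl,
           Ed \<union> {(v, S \<union> adjV V' S) | v. v \<in> adj E S - adjV V' S})"
proof -
  have m: "minimal_self_contained V' F' (induced_edges E (V'\<union>F')) S"
    and s': "s' = (V' - (S \<union> adj (induced_edges E (V'\<union>F')) S), F' - (S \<union> adj (induced_edges E (V'\<union>F')) S),
       insert (S \<union> adj (induced_edges E (V'\<union>F')) S) Cl,
       Ed \<union> {(v, S \<union> adj (induced_edges E (V'\<union>F')) S) | v. v \<in> adj E S - adj (induced_edges E (V'\<union>F')) S})"
    using assms(1) unfolding alg_step_with_def Let_def by auto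
  have SF: "S \<subseteq> F'" using m unfolding minimal_self_contained_def self_contained_set_def by blast
  have a: "adj (induced_edges E (V'\<union>F')) S = adjV V' S" using adj_eq[OF assms(2,3) SF] .
  have 1: "V' - (S \<union> adjV V' S) = V' - adjV V' S" using SF assms(2,3) disj by blast
  have 2: "F' - (S \<union> adjV V' S) = F' - S" using adjV_sub[of V' S] assms(2,3) disj by blast
  show ?thesis using m msc_eq[OF assms(2,3)] s' a 1 2 by simp
qed

lemma finite_adjV: "V' \<subseteq> V \<Longrightarrow> finite (adjV V' T)"
  using adjV_sub fV by (meson finite_subset)

lemma good_step:
  assumes g: "good (V',F',Cl,Ed)" and st: "alg_step_with E S (V',F',Cl,Ed) s'"
  shows "good s' \<and> card (fst (snd s')) < card F'"
proof -
  have V'V: "V' \<subseteq> V" and F'F: "F' \<subseteq> F" and cF: "card F' = card V'"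
    and hall: "\<forall>T\<subseteq>F'. card T \<le> card (adjV V' T)" using g unfolding good_def by auto
  have fV': "finite V'" using V'V fV finite_subset by blast
  have fF': "finite F'" using F'F fF finite_subset by blast
  note se = step_eq[OF st V'V F'F]
  have Sne: "S \<noteq> {}" and scS: "sc V' F' S" using se by auto
  have s'eq: "s' = (V' - adjV V' S, F' - S, insert (S \<union> adjV V' S) Cl,
           Ed \<union> {(v, S \<union> adjV V' S) | v. v \<in> adj E S - adjV V' S})" using se by blast
  have SF': "S \<subseteq> F'" and cS: "card S = card (adjV V' S)" using scS unfolding sc_def by auto
  have fS: "finite S" using SF' fF' finite_subset by blast
  have fa: "\<And>T. finite (adjV V' T)" using finite_adjV[OF V'V] .
  have adjV'': "\<And>T. adjV (V' - adjV V' S) T = adjV V' T - adjV V' S"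
    unfolding adjV_def by blast
  have hall2: "card T \<le> card (adjV (V' - adjV V' S) T)" if T: "T \<subseteq> F' - S" for T
  proof -
    have fT: "finite T" using T fF' finite_subset by blast
    have "card S + card T = card (S \<union> T)" 
    proof -
      have "S \<inter> T = {}" using T by blast
      then show ?thesis using fS fT by (simp add: card_Un_disjoint)
    qed
    also have "\<dots> \<le> card (adjV V' (S \<union> T))" 
    proof -
      have "S \<union> T \<subseteq> F'" using T SF' by blast
      then show ?thesis using hall by blast
    qed
    also have "adjV V' (S \<union> T) = adjV V' S \<union> (adjV V' T - adjV V' S)" using adjV_Un by blast
    also have "card \<dots> = card (adjV V' S) + card (adjV V' T - adjV V' S)"
      using fa by (intro card_Un_disjoint) auto
    finally show ?thesis using cS adjV'' by simp
  qed
  have c1: "card (F' - S) = card F' - card S" using SF' fS by (simp add: card_Diff_subset)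
  have c2: "card (V' - adjV V' S) = card V' - card (adjV V' S)"
    using adjV_sub fa by (simp add: card_Diff_subset)
  have "F' - S \<subset> F'" using Sne SF' by blast
  then have lt: "card (F' - S) < card F'" using fF' by (rule psubset_card_mono[rotated])
  show ?thesis unfolding s'eq good_def using V'V F'F c1 c2 cS cF hall2 lt by auto
qed

lemma good_sc_F:
  assumes g: "good (V',F',Cl,Ed)"
  shows "sc V' F' F'"
proof -
  have V'V: "V' \<subseteq> V" and F'F: "F' \<subseteq> F" and cF: "card F' = card V'"
    and hall: "\<forall>T\<subseteq>F'. card T \<le> card (adjV V' T)" using g unfolding good_def by auto
  have fV': "finite V'" using V'V fV finite_subset by blast
  have "card (adjV V' F') \<le> card V'" using adjV_sub fV' card_mono by blast
  then show ?thesis unfolding sc_def using hall cF by (metis dual_order.antisym order_refl)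
qed

lemma exists_msc:
  assumes g: "good (V',F',Cl,Ed)" and ne: "V' \<union> F' \<noteq> {}"
  shows "\<exists>S. S \<noteq> {} \<and> sc V' F' S \<and> (\<forall>S'. S' \<noteq> {} \<and> S' \<subset> S \<longrightarrow> \<not> sc V' F' S')"
proof -
  have V'V: "V' \<subseteq> V" and F'F: "F' \<subseteq> F" and cF: "card F' = card V'"
    using g unfolding good_def by auto
  have fV': "finite V'" using V'V fV finite_subset by blast
  have fF': "finite F'" using F'F fF finite_subset by blast
  have Fne: "F' \<noteq> {}" using ne cF fV' by auto
  define P where "P S \<longleftrightarrow> S \<noteq> {} \<and> sc V' F' S" for S
  have PF: "P F'" using good_sc_F[OF g] Fne P_def by auto
  obtain S where PS: "P S" and mn: "\<And>S'. P S' \<Longrightarrow> card S \<le> card S'"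
    using ex_has_least_nat[of P F' card] PF by blast
  have SF: "S \<subseteq> F'" using PS unfolding P_def sc_def by auto
  have "\<not> sc V' F' S'" if "S' \<noteq> {}" "S' \<subset> S" for S'
  proof
    assume "sc V' F' S'"
    then have "card S \<le> card S'" using mn[of S'] that unfolding P_def by blast
    moreover have "card S' < card S" using that SF fF' by (meson finite_subset psubset_card_mono)
    ultimately show False by simp
  qed
  moreover have "S \<noteq> {}" "sc V' F' S" using PS unfolding P_def by auto
  ultimately show ?thesis by blast
qed

lemma sc_Int:
  assumes V'V: "V' \<subseteq> V" and hall: "\<forall>T\<subseteq>F'. card T \<le> card (adjV V' T)"
    and fF': "finite F'"
    and A: "sc V' F' A" and B: "sc V' F' B"
  shows "sc V' F' (A \<inter> B) \<and> card (adjV V' (A \<inter> B)) = card (adjV V' A \<inter> adjV V' B)"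
proof -
  have fa: "\<And>T. finite (adjV V' T)" using finite_adjV[OF V'V] .
  have AF: "A \<subseteq> F'" and cA: "card A = card (adjV V' A)" and hA: "\<forall>T\<subseteq>A. card T \<le> card (adjV V' T)"
    using A unfolding sc_def by auto
  have BF: "B \<subseteq> F'" and cB: "card B = card (adjV V' B)"
    using B unfolding sc_def by auto
  have fA: "finite A" and fB: "finite B" using AF BF fF' finite_subset by auto
  have e1: "card (A \<union> B) + card (A \<inter> B) = card A + card B" using card_Un_Int[OF fA fB] by simp
  have e2: "card (adjV V' A \<union> adjV V' B) + card (adjV V' A \<inter> adjV V' B) = card (adjV V' A) + card (adjV V' B)"
    using card_Un_Int[OF fa fa] by simp
  have i1: "card (A \<union> B) \<le> card (adjV V' A \<union> adjV V' B)" 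
  proof -
    have "A \<union> B \<subseteq> F'" using AF BF by blast
    then show ?thesis using hall adjV_Un by metis
  qed
  have i2: "card (A \<inter> B) \<le> card (adjV V' (A \<inter> B))" using hA by blast
  have i3: "card (adjV V' (A \<inter> B)) \<le> card (adjV V' A \<inter> adjV V' B)"


  proof (rule card_mono)
    show "finite (adjV V' A \<inter> adjV V' B)" using fa by blast
    show "adjV V' (A \<inter> B) \<subseteq> adjV V' A \<inter> adjV V' B" unfolding adjV_def by blast
  qed
  have eq1: "card (A \<inter> B) = card (adjV V' (A \<inter> B))" using e1 e2 i1 i2 i3 cA cB by linarith
  have eq2: "card (adjV V' (A \<inter> B)) = card (adjV V' A \<inter> adjV V' B)" using e1 e2 i1 i2 i3 cA cB by linarith
  show ?thesis using eq1 eq2 hA AF unfolding sc_def by auto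
qed

lemma msc_disj:
  assumes V'V: "V' \<subseteq> V" and hall: "\<forall>T\<subseteq>F'. card T \<le> card (adjV V' T)"
    and fF': "finite F'"
    and A: "sc V' F' A" and mA: "\<forall>S'. S' \<noteq> {} \<and> S' \<subset> A \<longrightarrow> \<not> sc V' F' S'"
    and B: "sc V' F' B" and mB: "\<forall>S'. S' \<noteq> {} \<and> S' \<subset> B \<longrightarrow> \<not> sc V' F' S'"
    and AB: "A \<noteq> B"
  shows "A \<inter> B = {} \<and> adjV V' A \<inter> adjV V' B = {}"
proof -
  note I = sc_Int[OF V'V hall fF' A B]
  have "A \<inter> B = {}"
  proof (rule ccontr)
    assume ne: "A \<inter> B \<noteq> {}"
    have "A \<inter> B \<subset> A \<or> A \<inter> B \<subset> B" using AB by blast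
    moreover have "sc V' F' (A \<inter> B)" using I by blast
    ultimately show False using mA mB ne by metis
  qed
  moreover have "adjV V' {} = {}" unfolding adjV_def by blast
  ultimately have "card (adjV V' A \<inter> adjV V' B) = 0" using I by simp
  moreover have "finite (adjV V' A \<inter> adjV V' B)" using finite_adjV[OF V'V] by blast
  ultimately have "adjV V' A \<inter> adjV V' B = {}" by simp
  then show ?thesis using \<open>A \<inter> B = {}\<close> by blast
qed

lemma sc_transfer:
  assumes "a1 \<inter> adjV V' S2 = {}" "S1 \<inter> S2 = {}" "T \<subseteq> S2" "S2 \<subseteq> F'"
  shows "sc (V' - a1) (F' - S1) T \<longleftrightarrow> sc V' F' T"
proof -
  have e: "adjV (V' - a1) U = adjV V' U" if "U \<subseteq> S2" for U
    using assms(1) that unfolding adjV_def by blast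
  have "T \<subseteq> F' - S1 \<longleftrightarrow> T \<subseteq> F'" using assms by blast
  moreover have "\<forall>U\<subseteq>T. adjV (V' - a1) U = adjV V' U" using e assms(3) by blast
  ultimately show ?thesis unfolding sc_def by auto
qed

lemma diamond:
  assumes g: "good (V',F',Cl,Ed)" and st1: "alg_step_with E S1 (V',F',Cl,Ed) s1"
    and st2: "alg_step_with E S2 (V',F',Cl,Ed) s2" and ne: "S1 \<noteq> S2"
  shows "\<exists>u. alg_step_with E S2 s1 u \<and> alg_step_with E S1 s2 u"
proof -
  have V'V: "V' \<subseteq> V" and F'F: "F' \<subseteq> F"
    and hall: "\<forall>T\<subseteq>F'. card T \<le> card (adjV V' T)" using g unfolding good_def by auto
  have fF': "finite F'" using F'F fF finite_subset by blast
  note se1 = step_eq[OF st1 V'V F'F] and se2 = step_eq[OF st2 V'V F'F]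
  define a1 where "a1 = adjV V' S1"
  define a2 where "a2 = adjV V' S2"
  define C1 where "C1 = S1 \<union> a1"
  define C2 where "C2 = S2 \<union> a2"
  define X1 where "X1 = {(v, C1) | v. v \<in> adj E S1 - a1}"
  define X2 where "X2 = {(v, C2) | v. v \<in> adj E S2 - a2}"
  have s1: "s1 = (V' - a1, F' - S1, insert C1 Cl, Ed \<union> X1)"
    using se1 unfolding a1_def C1_def X1_def by blast
  have s2: "s2 = (V' - a2, F' - S2, insert C2 Cl, Ed \<union> X2)"
    using se2 unfolding a2_def C2_def X2_def by blast
  have D: "S1 \<inter> S2 = {} \<and> a1 \<inter> a2 = {}"
    unfolding a1_def a2_def
  proof (rule msc_disj[OF V'V hall fF'])
    show "sc V' F' S1" using se1 by (elim conjE)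
    show "\<forall>S'. S' \<noteq> {} \<and> S' \<subset> S1 \<longrightarrow> \<not> sc V' F' S'" using se1 by (elim conjE)
    show "sc V' F' S2" using se2 by (elim conjE)
    show "\<forall>S'. S' \<noteq> {} \<and> S' \<subset> S2 \<longrightarrow> \<not> sc V' F' S'" using se2 by (elim conjE)
  qed (rule ne)
  have S1F: "S1 \<subseteq> F'" and S2F: "S2 \<subseteq> F'" using se1 se2 unfolding sc_def by auto
  have a1V: "a1 \<subseteq> V'" and a2V: "a2 \<subseteq> V'" unfolding a1_def a2_def using adjV_sub by auto
  have gen: "alg_step_with E Sb (V' - aa, F' - Sa, insert Ca Cl, Ed \<union> Xa)
        (V' - aa - ab, F' - Sa - Sb, insert Cb (insert Ca Cl), Ed \<union> Xa \<union> {(v, Cb) | v. v \<in> adj E Sb - ab})"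
    if sa: "alg_step_with E Sa (V',F',Cl,Ed) sa" and sb: "alg_step_with E Sb (V',F',Cl,Ed) sb"
      and aa: "aa = adjV V' Sa" and ab: "ab = adjV V' Sb" and Cb: "Cb = Sb \<union> ab"
      and DD: "Sa \<inter> Sb = {}" "aa \<inter> ab = {}"
    for Sa Sb sa sb aa ab Ca Cb Xa
  proof -
    note sea = step_eq[OF sa V'V F'F] and seb = step_eq[OF sb V'V F'F]
    have SaF: "Sa \<subseteq> F'" and SbF: "Sb \<subseteq> F'" using sea seb unfolding sc_def by auto
    have V1: "V' - aa \<subseteq> V" and F1: "F' - Sa \<subseteq> F" using V'V F'F by auto
    have SbF1: "Sb \<subseteq> F' - Sa" using SbF DD by blast
    have tr: "\<And>T. T \<subseteq> Sb \<Longrightarrow> sc (V' - aa) (F' - Sa) T \<longleftrightarrow> sc V' F' T"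
      using sc_transfer[of aa V' Sb Sa _ F'] DD ab SbF by blast
    have m: "minimal_self_contained (V' - aa) (F' - Sa) (induced_edges E ((V' - aa) \<union> (F' - Sa))) Sb"
      unfolding msc_eq[OF V1 F1] using seb tr by (meson order.refl psubset_imp_subset)
    have ad: "adj (induced_edges E ((V' - aa) \<union> (F' - Sa))) Sb = ab"
      using adj_eq[OF V1 F1 SbF1] ab unfolding adjV_def using DD(2) aa ab unfolding adjV_def by blast
    have e1: "V' - aa - (Sb \<union> ab) = V' - aa - ab" using SbF F'F V'V disj by blast
    have e2: "F' - Sa - (Sb \<union> ab) = F' - Sa - Sb" using ab adjV_sub[of V' Sb] F'F V'V disj by blast
    show ?thesis unfolding alg_step_with_def Let_def using m ad e1 e2 Cb by simp
  qed
  define u where "u = (V' - a1 - a2, F' - S1 - S2, insert C2 (insert C1 Cl), Ed \<union> X1 \<union> X2)"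
  have u2: "u = (V' - a2 - a1, F' - S2 - S1, insert C1 (insert C2 Cl), Ed \<union> X2 \<union> X1)"
    unfolding u_def by (auto simp: insert_commute Un_ac Diff_eq Int_ac)
  have "alg_step_with E S2 s1 u"
    unfolding s1 u_def X2_def
    by (rule gen[OF st1 st2 a1_def a2_def C2_def]) (use D in auto)
  moreover have "alg_step_with E S1 s2 u"
    unfolding s2 u2 X1_def
    by (rule gen[OF st2 st1 a2_def a1_def C1_def]) (use D in auto)
  ultimately show ?thesis by blast
qed

lemma final_nostep: "alg_final s \<Longrightarrow> \<not> alg_step_with E S s s'"
proof
  assume f: "alg_final s" and st: "alg_step_with E S s s'"
  obtain V' F' Cl Ed where s: "s = (V',F',Cl,Ed)" by (cases s)
  have "F' = {}" using f s unfolding alg_final_def by simp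
  moreover have "minimal_self_contained V' F' (induced_edges E (V' \<union> F')) S"
    using st s unfolding alg_step_with_def Let_def by simp
  ultimately show False unfolding minimal_self_contained_def self_contained_set_def by blast
qed

lemma step_good: "good s \<Longrightarrow> alg_step_with E S s s' \<Longrightarrow> good s' \<and> card (fst (snd s')) < card (fst (snd s))"
  by (cases s) (use good_step in auto)

lemma step_det: "good s \<Longrightarrow> alg_step_with E S s s1 \<Longrightarrow> alg_step_with E S s s2 \<Longrightarrow> s1 = s2"
  by (cases s) (auto simp: alg_step_with_def Let_def)

lemma good_msc: "good s \<Longrightarrow> \<not> alg_final s \<Longrightarrow> \<exists>S s'. alg_step_with E S s s'"
proof -
  assume g: "good s" and nf: "\<not> alg_final s"
  obtain V' F' Cl Ed where s: "s = (V',F',Cl,Ed)" by (cases s)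
  have V'V: "V' \<subseteq> V" and F'F: "F' \<subseteq> F" using g s unfolding good_def by auto
  have "V' \<union> F' \<noteq> {}" using nf s unfolding alg_final_def by auto
  then obtain S where "minimal_self_contained V' F' (induced_edges E (V' \<union> F')) S"
    using exists_msc[of V' F' Cl Ed] g s msc_eq[OF V'V F'F] by blast
  then show ?thesis unfolding s alg_step_with_def Let_def by auto
qed

lemma term_ex: "good s \<Longrightarrow> \<exists>t. (alg_step E)\<^sup>*\<^sup>* s t \<and> alg_final t"
proof (induction "card (fst (snd s))" arbitrary: s rule: less_induct)
  case less
  show ?case
  proof (cases "alg_final s")
    case True then show ?thesis by blast
  next
    case False
    then obtain S s' where st: "alg_step_with E S s s'" using good_msc less.prems by blast
    then have "good s' \<and> card (fst (snd s')) < card (fst (snd s))" using step_good less.prems by blast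
    then obtain t where "(alg_step E)\<^sup>*\<^sup>* s' t \<and> alg_final t" using less.hyps by blast
    moreover have "alg_step E s s'" using st alg_step_def by blast
    ultimately show ?thesis by (meson converse_rtranclp_into_rtranclp)
  qed
qed

lemma uniq: "good s \<Longrightarrow> (alg_step E)\<^sup>*\<^sup>* s t1 \<Longrightarrow> alg_final t1 \<Longrightarrow> (alg_step E)\<^sup>*\<^sup>* s t2 \<Longrightarrow> alg_final t2 \<Longrightarrow> t1 = t2"
proof (induction "card (fst (snd s))" arbitrary: s t1 t2 rule: less_induct)
  case less
  have g: "good s" by fact
  show ?case
  proof (cases "alg_final s")
    case True
    have "s = t1" using less.prems(2) True final_nostep
      by (metis alg_step_def converse_rtranclpE)
    moreover have "s = t2" using less.prems(4) True final_nostep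
      by (metis alg_step_def converse_rtranclpE)
    ultimately show ?thesis by simp
  next
    case False
    obtain s1 where a1: "alg_step E s s1" and r1: "(alg_step E)\<^sup>*\<^sup>* s1 t1"
      using less.prems(2,3) False by (metis converse_rtranclpE)
    obtain s2 where a2: "alg_step E s s2" and r2: "(alg_step E)\<^sup>*\<^sup>* s2 t2"
      using less.prems(4,5) False by (metis converse_rtranclpE)
    obtain S1 where st1: "alg_step_with E S1 s s1" using a1 alg_step_def by blast
    obtain S2 where st2: "alg_step_with E S2 s s2" using a2 alg_step_def by blast
    have g1: "good s1" and c1: "card (fst (snd s1)) < card (fst (snd s))" using step_good[OF g st1] by auto
    have g2: "good s2" and c2: "card (fst (snd s2)) < card (fst (snd s))" using step_good[OF g st2] by auto
    show ?thesis
    proof (cases "S1 = S2")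
      case True
      then have "s1 = s2" using step_det[OF g st1] st2 by blast
      then show ?thesis using less.hyps[OF c1 g1 r1 less.prems(3)] r2 less.prems(5) by blast
    next
      case False
      obtain V' F' Cl Ed where s: "s = (V',F',Cl,Ed)" by (cases s)
      obtain u where u1: "alg_step_with E S2 s1 u" and u2: "alg_step_with E S1 s2 u"
        using diamond[of V' F' Cl Ed S1 s1 S2 s2] g st1 st2 False s by blast
      have gu: "good u" using step_good[OF g1 u1] by blast
      obtain t where rt: "(alg_step E)\<^sup>*\<^sup>* u t" and ft: "alg_final t" using term_ex[OF gu] by blast
      have "(alg_step E)\<^sup>*\<^sup>* s1 t" using u1 rt alg_step_def by (meson converse_rtranclp_into_rtranclp)
      then have "t1 = t" using less.hyps[OF c1 g1 r1 less.prems(3)] ft by blast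
      moreover have "(alg_step E)\<^sup>*\<^sup>* s2 t" using u2 rt alg_step_def by (meson converse_rtranclp_into_rtranclp)
      then have "t2 = t" using less.hyps[OF c2 g2 r2 less.prems(5)] ft by blast
      ultimately show ?thesis by simp
    qed
  qed
qed

lemma reach_good: "(alg_step E)\<^sup>*\<^sup>* s0 s \<Longrightarrow> good s0 \<Longrightarrow> good s"
  by (induction rule: rtranclp_induct) (use step_good alg_step_def in blast)+

end

theorem theorem4:
  fixes V F W :: "'a set" and E :: "('a \<times> 'a) set"
  assumes "finite_bipartite_graph V F E"
    and "W \<subseteq> V"
    and "self_contained_graph (V - W) F (induced_edges E ((V - W) \<union> F))"
  shows "(\<forall>s. (alg_step E)\<^sup>*\<^sup>* (alg_init W V F) s \<longrightarrow>
            (case s of (V', F', _, _) \<Rightarrow>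
               V' \<union> F' \<noteq> {} \<longrightarrow>
               (\<exists>S. minimal_self_contained V' F' (induced_edges E (V' \<union> F')) S)))
       \<and> (\<forall>s. (alg_step E)\<^sup>*\<^sup>* (alg_init W V F) s \<longrightarrow>
            (\<exists>t. (alg_step E)\<^sup>*\<^sup>* s t \<and> alg_final t))
       \<and> (\<forall>s1 s2. (alg_step E)\<^sup>*\<^sup>* (alg_init W V F) s1 \<and> alg_final s1 \<and>
                  (alg_step E)\<^sup>*\<^sup>* (alg_init W V F) s2 \<and> alg_final s2 \<longrightarrow>
                  alg_output s1 = alg_output s2)"
proof -
  interpret bg V F E
    using assms(1) unfolding finite_bipartite_graph_def bipartite_graph_def by unfold_locales auto
  have VW: "V - W \<subseteq> V" by blast
  have FF: "F \<subseteq> F" by blast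
  have cF: "card F = card (V - W)"
    and scF: "self_contained_set (V - W) F (induced_edges E ((V - W) \<union> F)) F"
    using assms(3) unfolding self_contained_graph_def by auto
  have "sc (V - W) F F" using scF sc_eq[OF VW FF] by blast
  then have "\<forall>T\<subseteq>F. card T \<le> card (adjV (V - W) T)" unfolding sc_def by blast
  then have g0: "good (alg_init W V F)" unfolding alg_init_def good_def using cF by auto
  have P1: "(case s of (V', F', _, _) \<Rightarrow>
               V' \<union> F' \<noteq> {} \<longrightarrow>
               (\<exists>S. minimal_self_contained V' F' (induced_edges E (V' \<union> F')) S))"
    if r: "(alg_step E)\<^sup>*\<^sup>* (alg_init W V F) s" for s
  proof -
    obtain V' F' Cl Ed where s: "s = (V',F',Cl,Ed)" by (cases s)
    have g: "good (V',F',Cl,Ed)" using reach_good[OF r g0] s by simp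
    have V'V: "V' \<subseteq> V" and F'F: "F' \<subseteq> F" using g unfolding good_def by auto
    have "V' \<union> F' \<noteq> {} \<longrightarrow> (\<exists>S. minimal_self_contained V' F' (induced_edges E (V' \<union> F')) S)"
    proof
      assume "V' \<union> F' \<noteq> {}"
      then obtain S where "S \<noteq> {} \<and> sc V' F' S \<and> (\<forall>S'. S' \<noteq> {} \<and> S' \<subset> S \<longrightarrow> \<not> sc V' F' S')"
        using exists_msc[OF g] by blast
      then have "minimal_self_contained V' F' (induced_edges E (V' \<union> F')) S"
        by (rule iffD2[OF msc_eq[OF V'V F'F]])
      then show "\<exists>S. minimal_self_contained V' F' (induced_edges E (V' \<union> F')) S" by blast
    qed
    then show ?thesis unfolding s by simp
  qed
  have P2: "\<exists>t. (alg_step E)\<^sup>*\<^sup>* s t \<and> alg_final t"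
    if r: "(alg_step E)\<^sup>*\<^sup>* (alg_init W V F) s" for s
    using term_ex reach_good[OF r g0] by blast
  have P3: "alg_output s1 = alg_output s2"
    if "(alg_step E)\<^sup>*\<^sup>* (alg_init W V F) s1 \<and> alg_final s1 \<and>
        (alg_step E)\<^sup>*\<^sup>* (alg_init W V F) s2 \<and> alg_final s2" for s1 s2
    using uniq[OF g0] that by metis
  show ?thesis using P1 P2 P3 by blast
qed

end
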